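(* Let $\phi_*\in(0,\pi/2)$, $R\ge33.2r$, and consider the billiard map on $Q(\phi_*,R)$. For $x\in M_r$ with $n_1\ge2$, letting $\tau_0=|p(x_0)p(x_1)|$ and $\tau_1=|p(F^{n_1}x_1)p(x_2)|$, one has $$\tau_0<\tfrac23 d_0+\tfrac23 d_1\quad\text{and}\quad\tau_1<\tfrac23 d_1+\tfrac23 d_2.$$
   Context: Setting: $r=1$, $Q(\phi_*,R)=D(O_r,r)\cap D(O_R,R)$ with $|O_rO_R|=\sqrt{R^2-r^2\sin^2\phi_*}-r\cos\phi_*$; boundary arcs $\Gamma_r\subset\partial D(O_r,r)$ (position angles $[\phi_*,2\pi-\phi_*]$) and $\Gamma_R\subset\partial D(O_R,R)$. Phase space $M=M_r\sqcup M_R$, coordinates $(\phi,\theta)$ with $\theta\in(0,\pi)$ the angle from the positive tangent direction; $p(x)$ the base point; $F$ the billiard map. $M_r^{out}=M_r\cap F^{-1}(M_R)$, $M_R^{out}=M_R\cap F^{-1}(M_r)$. For $x\in M_r$: $x_0=F^{n_0}x$ with $n_0=\inf\{n\ge0:F^nx\in M_r^{out}\}$, $x_1=Fx_0$, $n_1=\inf\{n\ge0:F^nx_1\in M_R^{out}\}$, $x_2=F^{n_1+1}x_1$; $d_0=r\sin\theta(x_0)$, $d_1=R\sin\theta(x_1)$, $d_2=r\sin\theta(x_2)$. *)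

theory Defs
  imports Complex_Main
begin

text \<open>Billiard table Q(phs,R) = D(O_r,1) \<inter> D(O_R,R) in the complex plane, with r = 1,
  O_r = 0 and O_R = -|O_r O_R| on the real axis.  The arc Gamma_r consists of the points
  cis phi with phs \<le> phi \<le> 2 pi - phs; the arc Gamma_R consists of the points
  O_R + R cis psi with |psi| \<le> arcsin (sin phs / R) (angle around O_R).\<close>

datatype comp = Cr | CR

text \<open>A phase point is (component, position angle phi, angle theta from the positive
  (counterclockwise) tangent direction).\<close>
type_synonym phase = "comp \<times> real \<times> real"

definition centre_dist :: "real \<Rightarrow> real \<Rightarrow> real" where
  "centre_dist phs R = sqrt (R\<^sup>2 - (sin phs)\<^sup>2) - cos phs"

definition O_R :: "real \<Rightarrow> real \<Rightarrow> complex" where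
  "O_R phs R = - complex_of_real (centre_dist phs R)"

definition psi_star :: "real \<Rightarrow> real \<Rightarrow> real" where
  "psi_star phs R = arcsin (sin phs / R)"

definition phi_of :: "phase \<Rightarrow> real" where "phi_of x = fst (snd x)"
definition theta_of :: "phase \<Rightarrow> real" where "theta_of x = snd (snd x)"

definition valid_phase :: "real \<Rightarrow> real \<Rightarrow> phase \<Rightarrow> bool" where
  "valid_phase phs R x \<longleftrightarrow> 0 < theta_of x \<and> theta_of x < pi \<and>
     (fst x = Cr \<longrightarrow> phs \<le> phi_of x \<and> phi_of x \<le> 2 * pi - phs) \<and>
     (fst x = CR \<longrightarrow> - psi_star phs R \<le> phi_of x \<and> phi_of x \<le> psi_star phs R)"

definition non_corner :: "real \<Rightarrow> real \<Rightarrow> phase \<Rightarrow> bool" where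
  "non_corner phs R x \<longleftrightarrow>
     (fst x = Cr \<longrightarrow> phs < phi_of x \<and> phi_of x < 2 * pi - phs) \<and>
     (fst x = CR \<longrightarrow> - psi_star phs R < phi_of x \<and> phi_of x < psi_star phs R)"

definition Mr :: "real \<Rightarrow> real \<Rightarrow> phase set" where
  "Mr phs R = {x. valid_phase phs R x \<and> fst x = Cr}"

definition MR :: "real \<Rightarrow> real \<Rightarrow> phase set" where
  "MR phs R = {x. valid_phase phs R x \<and> fst x = CR}"

definition pos :: "real \<Rightarrow> real \<Rightarrow> phase \<Rightarrow> complex" where
  "pos phs R x = (case fst x of
      Cr \<Rightarrow> cis (phi_of x)
    | CR \<Rightarrow> O_R phs R + complex_of_real R * cis (phi_of x))"

definition tangent :: "phase \<Rightarrow> complex" where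
  "tangent x = \<i> * cis (phi_of x)"

definition vel :: "phase \<Rightarrow> complex" where
  "vel x = cis (theta_of x) * tangent x"

text \<open>One billiard step x \<mapsto> y: y is the next collision with the boundary along the ray
  from p(x) in direction vel x, at a non-corner point, and the outgoing velocity is the
  reflection of the incoming velocity in the tangent line at p(y).\<close>
definition bstep :: "real \<Rightarrow> real \<Rightarrow> phase \<Rightarrow> phase \<Rightarrow> bool" where
  "bstep phs R x y \<longleftrightarrow> valid_phase phs R x \<and> valid_phase phs R y \<and> non_corner phs R y \<and>
     (\<exists>t>0. pos phs R y = pos phs R x + complex_of_real t * vel x) \<and>
     vel y = (tangent y)\<^sup>2 * cnj (vel x)"

text \<open>The billiard map F (meaningful where bstep holds).\<close>
definition bmap :: "real \<Rightarrow> real \<Rightarrow> phase \<Rightarrow> phase" where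
  "bmap phs R x = (THE y. bstep phs R x y)"

definition Mr_out :: "real \<Rightarrow> real \<Rightarrow> phase set" where
  "Mr_out phs R = {x \<in> Mr phs R. bmap phs R x \<in> MR phs R}"

definition MR_out :: "real \<Rightarrow> real \<Rightarrow> phase set" where
  "MR_out phs R = {x \<in> MR phs R. bmap phs R x \<in> Mr phs R}"

end

theory Submission
  imports Defs
begin


lemma sin_add_le2:
  assumes "0 \<le> u" "u \<le> pi/2"
  shows "sin (u + u/2) \<le> 2 * sin u"
proof -
  have "sin (u + u/2) = sin u * cos (u/2) + cos u * sin (u/2)" by (rule sin_add)
  moreover have "sin u * cos (u/2) \<le> sin u"
    using assms by (intro mult_left_le) (auto intro: sin_ge_zero)
  moreover have "cos u * sin (u/2) \<le> sin (u/2)"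
    using assms by (intro mult_left_le_one_le) (auto intro!: sin_ge_zero cos_ge_zero)
  moreover have "sin (u/2) \<le> sin u"
    using assms by (subst sin_mono_le_eq) auto
  ultimately show ?thesis by linarith
qed

lemma analytic:
  fixes R s e k c ps th psi :: real
  assumes R: "33.2 \<le> R" and s: "0 < s" "s \<le> 1" and e: "0 \<le> e" "e \<le> 1"
    and k: "k = sqrt (R\<^sup>2 - s\<^sup>2)" and c: "c = k - e"
    and sps: "sin ps = s / R" and cps: "cos ps = k / R" and ps: "0 < ps" "ps \<le> pi/6"
    and hA: "ps \<le> 2*th - psi" and hB: "psi + 4*th \<le> ps" and hC: "- ps \<le> psi" and th: "0 < th"
  shows "R * cos psi - k < 2 * sin (th - psi) * (2 * c * sin (th - psi) - R * sin th)
       \<and> 0 < 2 * c * sin (th - psi) - R * sin th \<and> 0 < sin (th - psi)"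
proof -
  define a where "a = th - psi"
  define S where "S = sin a"
  have a1: "2*ps/3 \<le> a" using hA hB unfolding a_def by linarith
  have a2: "a \<le> 3*ps/2" using hB hC th unfolding a_def by linarith
  have a3: "th \<le> 2*a - ps" using hA hB unfolding a_def by smt
  have pi2: "pi/6 < pi/2" using pi_gt_zero by linarith
  have Slo1: "sin (2*ps/3) \<le> S" unfolding S_def
    using a1 a2 ps pi_gt_zero by (subst sin_mono_le_eq) auto
  have "s / R = sin (2*ps/3 + (2*ps/3)/2)" using sps by simp
  also have "\<dots> \<le> 2 * sin (2*ps/3)" using ps pi_gt_zero by (intro sin_add_le2) auto
  finally have Slo: "s / (2*R) \<le> S" using Slo1 by (simp add: field_simps)
  have "S \<le> sin (ps + ps/2)" unfolding S_def
    using a1 a2 ps pi_gt_zero by (subst sin_mono_le_eq) auto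
  also have "\<dots> \<le> 2 * sin ps" using ps pi_gt_zero by (intro sin_add_le2) auto
  finally have Shi: "S \<le> 2 * s / R" using sps by simp
  have Rpos: "0 < R" using R by simp
  have S0: "0 < S" using Slo s Rpos by (smt (verit) divide_pos_pos)
  have "sin th \<le> sin (2*a - ps)"
    using a1 a2 a3 ps th pi_gt_zero by (subst sin_mono_le_eq) auto
  also have "sin (2*a - ps) = 2 * S * cos a * (k/R) - (1 - 2*S^2) * (s/R)"
  proof -
    have "sin (2*a - ps) = sin (2*a) * cos ps - cos (2*a) * sin ps" by (rule sin_diff)
    moreover have "sin (2*a) = 2 * sin a * cos a" by (rule sin_double)
    moreover have "cos (2*a) = 1 - 2 * (sin a)^2" using cos_double[of a] sin_cos_squared_add[of a] by simp
    ultimately show ?thesis by (simp add: sps cps S_def)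
  qed
  finally have sth: "R * sin th \<le> 2 * S * cos a * k - (1 - 2*S^2) * s"
    using Rpos by (simp add: field_simps)
  have sR: "s^2 \<le> R^2" using s R by (intro power_mono) auto
  have k0: "0 \<le> k" unfolding k using sR by simp
  have "S * cos a * k \<le> S * k" using S0 k0 mult_right_mono[OF cos_le_one[of a] k0] by (simp add: mult.assoc)
  then have h1: "2*S*cos a*k \<le> 2*S*k" by simp
  have h2: "2*S*k = 2*c*S + 2*S*e" unfolding c by (simp add: algebra_simps)
  have Fge: "2*c*S - R * sin th \<ge> s - 2*S*e - 2*S^2*s" using sth h1 h2 by (simp add: algebra_simps)
  have Se: "S * e \<le> S" using S0 e by (simp add: mult_left_le)
  have S2: "S^2 * s \<le> (2*s/R)^2 * s" using Shi S0 s by (intro mult_right_mono power_mono) auto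
  have s3: "s^3 \<le> s" using s by (simp add: power3_eq_cube) (smt (verit) mult_le_one mult_nonneg_nonneg mult_left_le)
  have "(2*s/R)^2 * s = 4 * s^3 / R^2" by (simp add: power2_eq_square power3_eq_cube field_simps)
  also have "\<dots> \<le> 4 * s / R^2" using s3 Rpos by (simp add: divide_right_mono)
  finally have S3: "(2*s/R)^2 * s \<le> 4*s/R^2" .
  define G where "G = 1 - 4/R - 8/R^2"
  have Fge2: "2*c*S - R * sin th \<ge> s - 4*s/R - 8*s/R^2" using Fge Se S2 S3 Shi by linarith
  then have Fge3: "2*c*S - R * sin th \<ge> s * G" unfolding G_def by (simp add: algebra_simps)
  have RR: "33.2 * R \<le> R^2" using R by (simp add: power2_eq_square)
  have RRR: "33.2 * R^2 \<le> R^3" using R by (simp add: power2_eq_square power3_eq_cube)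
  have g1: "4/R \<le> 4/33.2" using R by (intro divide_left_mono) auto
  have g2: "8/R^2 \<le> 8/33.2" using R RR by (intro divide_left_mono) auto
  have Gpos: "0 < G" unfolding G_def using g1 g2 by simp
  have Fpos: "0 < 2*c*S - R * sin th" using Fge3 Gpos s by (smt (verit) mult_pos_pos)
  have lowb: "(s/(2*R)) * (s * G) \<le> S * (2*c*S - R * sin th)"
    using Slo Fge3 s Gpos Rpos S0 by (intro mult_mono) auto
  have kk: "k^2 = R^2 - s^2" unfolding k using sR by simp
  have s2: "s^2 \<le> 1" using s by (simp add: power_le_one)
  have "(R - 1)^2 = R^2 - 2*R + 1" by (simp add: power2_eq_square algebra_simps)
  then have "(R - 1)^2 \<le> R^2 - s^2" using s2 R by simp
  then have kR: "R - 1 \<le> k" unfolding k by (rule real_le_rsqrt)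
  have Rk: "(R - k) * (R + k) = s^2" using kk by (simp add: algebra_simps power2_eq_square)
  have cpsi: "R * cos psi \<le> R" using Rpos by simp
  have poly: "R^3 < (2*R - 1) * (R^2 - 4*R - 8)"
  proof -
    have "(2*R - 1) * (R^2 - 4*R - 8) = 2*R^3 - 9*R^2 - 12*R + 8" by (simp add: power2_eq_square power3_eq_cube algebra_simps)
    then show ?thesis using RR RRR R by simp
  qed
  have Geq: "G * (2*R - 1) = (2*R - 1) * (R^2 - 4*R - 8) / R^2" unfolding G_def using Rpos
    by (simp add: field_simps power2_eq_square)
  have "R * R^2 < (2*R - 1) * (R^2 - 4*R - 8)" using poly by (simp add: power2_eq_square power3_eq_cube)
  then have "R < (2*R - 1) * (R^2 - 4*R - 8) / R^2" using Rpos by (simp add: pos_less_divide_eq)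
  then have "R < G * (2*R - 1)" using Geq by simp
  then have "R * s^2 < G * (2*R-1) * s^2" using s by (intro mult_strict_right_mono) auto
  also have "\<dots> \<le> G * (R + k) * s^2" using kR Gpos s by (intro mult_right_mono mult_left_mono) auto
  finally have "R * ((R-k)*(R+k)) < G * (R+k) * s^2" using Rk by simp
  then have "(R * (R - k)) * (R + k) < (G * s^2) * (R + k)" by (simp add: algebra_simps)
  moreover have "0 < R + k" using kR R by simp
  ultimately have "R * (R - k) < G * s^2" by (simp add: mult_less_cancel_right_pos)
  then have "R - k < s^2 * G / R" using Rpos by (simp add: field_simps)
  also have "s^2 * G / R = 2 * ((s/(2*R)) * (s * G))" using Rpos by (simp add: field_simps power2_eq_square)
  also have "\<dots> \<le> 2 * (S * (2*c*S - R * sin th))" using lowb by linarith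
  finally have "R * cos psi - k < 2 * S * (2*c*S - R * sin th)" using cpsi by simp
  then show ?thesis using Fpos S0 unfolding S_def a_def by simp
qed


lemma cis_eq_small:
  assumes h: "cis a = cis b" and lt: "\<bar>a - b\<bar> < 2*pi"
  shows "a = b"
proof -
  have "sin a = sin b \<and> cos a = cos b"
    using arg_cong[OF h, of Re] arg_cong[OF h, of Im] by simp
  then obtain n :: int where n: "a = b + 2*pi*n" using sin_cos_eq_iff by blast
  have "n = 0"
  proof (rule ccontr)
    assume "n \<noteq> 0"
    then have "1 \<le> \<bar>real_of_int n\<bar>" by linarith
    then have "2*pi*1 \<le> 2*pi*\<bar>real_of_int n\<bar>" using pi_gt_zero by (intro mult_left_mono) auto
    also have "2*pi*\<bar>real_of_int n\<bar> = \<bar>a - b\<bar>" using n pi_gt_zero by (simp add: abs_mult)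
    finally show False using lt by simp
  qed
  then show ?thesis using n by simp
qed

lemma geo_half:
  fixes R s e k c ps th psi a2 a3 t :: real and Q0 w0 :: complex
  assumes R: "33.2 \<le> R" and s: "0 < s" "s \<le> 1" and e: "0 \<le> e" "e \<le> 1" and se: "s^2 + e^2 = 1"
    and k: "k = sqrt (R\<^sup>2 - s\<^sup>2)" and c: "c = k - e"
    and sps: "sin ps = s / R" and cps: "cos ps = k / R" and ps: "0 < ps" "ps \<le> pi/6"
    and psi: "- ps \<le> psi" "psi \<le> ps" and th: "0 < th" "th \<le> pi/2"
    and a2: "- ps \<le> a2" "a2 \<le> ps" and a3: "- ps \<le> a3" "a3 \<le> ps"
    and ca2: "cis a2 = cis (psi + 2*th)" and ca3: "cis a3 = cis (psi + 4*th)"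
    and Q0: "cmod Q0 = 1" and Q0R: "cmod (Q0 + complex_of_real c) \<le> R"
    and w0: "w0 = \<i> * cis (psi - th)" and t: "0 < t"
    and Q1: "- complex_of_real c + complex_of_real R * cis psi = Q0 + complex_of_real t * w0"
  shows "3 * t < 2 * (- Re (Q0 * cnj w0)) + 2 * R * sin th"
proof -
  have pi6: "pi/6 < pi/2" using pi_gt_zero by linarith
  have e2: "a2 = psi + 2*th"
    using cis_eq_small[OF ca2] psi a2 th ps pi_gt_zero by (intro cis_eq_small[OF ca2]) auto
  have e3: "a3 = psi + 4*th"
    using psi a2 a3 th ps pi_gt_zero e2 by (intro cis_eq_small[OF ca3]) auto
  have hB: "psi + 4*th \<le> ps" using e3 a3 by simp
  define A where "A = cos psi"
  define B where "B = sin psi"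
  define C where "C = cos th"
  define D where "D = sin th"
  define S where "S = D*A - C*B"
  define wy where "wy = A*C + B*D"
  have AB: "A^2 + B^2 = 1" unfolding A_def B_def by simp
  have CD: "C^2 + D^2 = 1" unfolding C_def D_def by simp
  have Sdef: "S = sin (th - psi)" unfolding S_def A_def B_def C_def D_def by (simp add: sin_diff algebra_simps)
  have w0c: "w0 = Complex S wy"
    unfolding w0 S_def wy_def A_def B_def C_def D_def
    by (simp add: complex_eq_iff sin_diff cos_diff algebra_simps)
  have Q0c: "Q0 = Complex (- c + R*A - t*S) (R*B - t*wy)"
    using Q1 unfolding A_def B_def w0c by (simp add: complex_eq_iff algebra_simps)
  define x0 where "x0 = - c + R*A - t*S"
  define y0 where "y0 = R*B - t*wy"
  have ww: "S^2 + wy^2 = 1" unfolding S_def wy_def using AB CD by algebra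
  have qw: "A*S + B*wy = D" unfolding S_def wy_def using AB by algebra
  define p where "p = - c*S + R*D"
  define N1 where "N1 = c^2 - 2*c*R*A + R^2"
  have norm1: "x0^2 + y0^2 = 1" using Q0 unfolding Q0c x0_def[symmetric] y0_def[symmetric]
    by (simp add: cmod_def)
  have normsq: "x0^2 + y0^2 = N1 - 2*t*p + t^2"
    unfolding x0_def y0_def N1_def p_def using AB ww qw by algebra
  have normR: "(x0 + c)^2 + y0^2 \<le> R^2"
  proof -
    have "cmod (Q0 + complex_of_real c) = sqrt ((x0 + c)^2 + y0^2)"
      unfolding Q0c x0_def y0_def by (simp add: cmod_def)
    then have "sqrt ((x0 + c)^2 + y0^2) \<le> R" using Q0R by simp
    then have "(sqrt ((x0 + c)^2 + y0^2))^2 \<le> R^2" by (intro power_mono) auto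
    then show ?thesis by simp
  qed
  have normR2: "(x0 + c)^2 + y0^2 = R^2 - 2*t*R*D + t^2"
    unfolding x0_def y0_def using AB ww qw by algebra
  have tle: "t \<le> 2*R*D"
  proof -
    have "t * t \<le> t * (2*R*D)" using normR normR2 by (simp add: power2_eq_square algebra_simps)
    then show ?thesis using t by simp
  qed
  have Rpos: "0 < R" using R by simp
  have sR: "s^2 \<le> R^2" using s R by (intro power_mono) auto
  have kk: "k^2 = R^2 - s^2" unfolding k using sR by simp
  have s2: "s^2 \<le> 1" using s by (simp add: power_le_one)
  have "(R - 1)^2 = R^2 - 2*R + 1" by (simp add: power2_eq_square algebra_simps)
  then have "(R - 1)^2 \<le> R^2 - s^2" using s2 R by simp
  then have kR: "R - 1 \<le> k" unfolding k by (rule real_le_rsqrt)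
  have cpos: "0 < c" using kR e R c by simp
  have ckey: "c^2 + R^2 - 1 = 2*c*k" using kk se unfolding c by (simp add: power2_eq_square algebra_simps)
  have hA: "ps \<le> 2*th - psi"
  proof (rule ccontr)
    assume nA: "\<not> ps \<le> 2*th - psi"
    have "\<bar>psi - 2*th\<bar> < ps" using nA psi th by simp
    then have "cos ps < cos \<bar>psi - 2*th\<bar>" using ps pi_gt_zero
      by (subst cos_mono_less_eq) auto
    then have cgt: "k / R < cos (psi - 2*th)" using cps by simp
    have cexp: "cos (psi - 2*th) = A - 2*D*S"
    proof -
      have c2: "cos (2*th) = 1 - 2*D^2" using cos_double[of th] sin_cos_squared_add[of th] unfolding D_def by simp
      have s2': "sin (2*th) = 2*D*C" unfolding D_def C_def by (simp add: sin_double)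
      have "cos (psi - 2*th) = A * (1 - 2*D^2) + B * (2*D*C)"
        using cos_diff[of psi "2*th"] unfolding c2 s2' A_def B_def by simp
      then show ?thesis unfolding S_def by (simp add: algebra_simps power2_eq_square)
    qed
    have "k < R * cos (psi - 2*th)" using cgt Rpos by (simp add: field_simps)
    then have P1: "k < R*(A - 2*D*S)" using cexp by simp
    have "cos ps \<le> cos \<bar>psi\<bar>" using psi ps pi_gt_zero by (subst cos_mono_le_eq) auto
    then have P2: "k \<le> R*A" using cps Rpos unfolding A_def by (simp add: field_simps)
    define mu where "mu = 2*R*D"
    define NP where "NP = N1 - 2*mu*p + mu^2"
    have NPe: "NP = c^2 + R^2 - 2*c*R*(A - 2*D*S)" unfolding NP_def N1_def mu_def p_def
      by (simp add: power2_eq_square algebra_simps)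
    have NPlt: "NP < 1"
    proof -
      have "2*c*k < 2*c*(R*(A - 2*D*S))" using P1 cpos by simp
      then show ?thesis using NPe ckey by (simp add: algebra_simps)
    qed
    have N1le: "N1 \<le> 1"
    proof -
      have "2*c*k \<le> 2*c*(R*A)" using P2 cpos by simp
      then show ?thesis using ckey unfolding N1_def by (simp add: algebra_simps)
    qed
    have ident: "mu * (x0^2 + y0^2) = (mu - t) * N1 + t * NP - t * mu * (mu - t)"
      unfolding normsq NP_def by (simp add: power2_eq_square algebra_simps)
    have "(mu - t) * N1 \<le> (mu - t)" using tle N1le unfolding mu_def by (simp add: mult_left_le)
    moreover have "t * NP < t" using t NPlt by simp
    moreover have "0 \<le> t * mu * (mu - t)" using t tle unfolding mu_def[symmetric]
      by (intro mult_nonneg_nonneg) auto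
    ultimately have "mu * (x0^2 + y0^2) < mu" using ident by linarith
    then show False using norm1 by simp
  qed
  have an: "R * cos psi - k < 2 * sin (th - psi) * (2 * c * sin (th - psi) - R * sin th)
       \<and> 0 < 2 * c * sin (th - psi) - R * sin th \<and> 0 < sin (th - psi)"
    using analytic[OF R s e k c sps cps ps hA hB psi(1) th(1)] .
  then have an1: "R*A - k < 2*S*(2*c*S - R*D)" and an2: "0 < 2*c*S - R*D" and an3: "0 < S"
    unfolding Sdef A_def D_def by auto
  define d0 where "d0 = t - p"
  have d0e: "- Re (Q0 * cnj w0) = d0"
    unfolding Q0c w0c d0_def p_def x0_def[symmetric] y0_def[symmetric]
    using normsq
    unfolding x0_def y0_def using AB ww qw by (simp; algebra)
  define Bq where "Bq = 3*c*S - R*D"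
  have cS: "0 < c*S" using an3 cpos by simp
  have Bpos: "0 < Bq" unfolding Bq_def using an2 cS by linarith
  have d0sq0: "d0^2 = t^2 - 2*t*p + p^2" unfolding d0_def by algebra
  have d0sq: "d0^2 = 1 - N1 + p^2" using norm1 normsq d0sq0 by linarith
  have "2*c*(R*A - k) = 2*c*R*A - 2*c*k" by algebra
  then have "1 - N1 = 2*c*(R*A - k)" unfolding N1_def using ckey by linarith
  also have "\<dots> < 2*c*(2*S*(2*c*S - R*D))" using an1 cpos by simp
  also have "\<dots> = Bq^2 - p^2" unfolding Bq_def p_def by algebra
  finally have "d0^2 < Bq^2" using d0sq by linarith
  then have "d0 < Bq"
  proof (cases "d0 \<le> 0")
    case True then show ?thesis using Bpos by simp
  next
    case False then show ?thesis using \<open>d0^2 < Bq^2\<close> Bpos by (simp add: power_less_imp_less_base)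
  qed
  then show ?thesis unfolding d0e D_def[symmetric] using d0_def Bq_def p_def by linarith
qed
lemma cis_plus_2pi: "cis (x + 2*pi) = cis x" by (simp add: complex_eq_iff)

lemma geo:
  fixes R s e k c ps th psi a2 a3 t :: real and Q0 w0 :: complex
  assumes R: "33.2 \<le> R" and s: "0 < s" "s \<le> 1" and e: "0 \<le> e" "e \<le> 1" and se: "s^2 + e^2 = 1"
    and k: "k = sqrt (R\<^sup>2 - s\<^sup>2)" and c: "c = k - e"
    and sps: "sin ps = s / R" and cps: "cos ps = k / R" and ps: "0 < ps" "ps \<le> pi/6"
    and psi: "- ps \<le> psi" "psi \<le> ps" and th: "0 < th" "th < pi"
    and a2: "- ps \<le> a2" "a2 \<le> ps" and a3: "- ps \<le> a3" "a3 \<le> ps"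
    and ca2: "cis a2 = cis (psi + 2*th)" and ca3: "cis a3 = cis (psi + 4*th)"
    and Q0: "cmod Q0 = 1" and Q0R: "cmod (Q0 + complex_of_real c) \<le> R"
    and w0: "w0 = \<i> * cis (psi - th)" and t: "0 < t"
    and Q1: "- complex_of_real c + complex_of_real R * cis psi = Q0 + complex_of_real t * w0"
  shows "3 * t < 2 * (- Re (Q0 * cnj w0)) + 2 * R * sin th"
proof (cases "th \<le> pi/2")
  case True
  show ?thesis using geo_half[OF R s e se k c sps cps ps psi th(1) True a2 a3 ca2 ca3 Q0 Q0R w0 t Q1] .
next
  case False
  have psi': "- ps \<le> - psi" "- psi \<le> ps" using psi by auto
  have th': "0 < pi - th" "pi - th \<le> pi/2" using th False by auto
  have a2': "- ps \<le> - a2" "- a2 \<le> ps" using a2 by auto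
  have a3': "- ps \<le> - a3" "- a3 \<le> ps" using a3 by auto
  have "cis (- a2) = cnj (cis a2)" by (simp add: cis_cnj)
  also have "\<dots> = cis (- (psi + 2*th))" using ca2 by (simp add: cis_cnj)
  also have "\<dots> = cis (- (psi + 2*th) + 2*pi)" by (rule cis_plus_2pi[symmetric])
  finally have ca2': "cis (- a2) = cis (- psi + 2*(pi - th))" by (simp add: algebra_simps)
  have "cis (- a3) = cnj (cis a3)" by (simp add: cis_cnj)
  also have "\<dots> = cis (- (psi + 4*th))" using ca3 by (simp add: cis_cnj)
  also have "\<dots> = cis (- (psi + 4*th) + 2*pi)" by (rule cis_plus_2pi[symmetric])
  also have "\<dots> = cis (- (psi + 4*th) + 2*pi + 2*pi)" by (rule cis_plus_2pi[symmetric])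
  finally have ca3': "cis (- a3) = cis (- psi + 4*(pi - th))" by (simp add: algebra_simps)
  have Q0': "cmod (cnj Q0) = 1" using Q0 by simp
  have "cnj Q0 + complex_of_real c = cnj (Q0 + complex_of_real c)" by simp
  then have Q0R': "cmod (cnj Q0 + complex_of_real c) \<le> R" using Q0R by (simp only: complex_mod_cnj)
  have w0': "cnj w0 = \<i> * cis (- psi - (pi - th))"
    unfolding w0 by (simp add: complex_eq_iff cos_diff sin_diff)
  have Q1': "- complex_of_real c + complex_of_real R * cis (- psi) = cnj Q0 + complex_of_real t * cnj w0"
  proof -
    have "cnj (- complex_of_real c + complex_of_real R * cis psi) = cnj (Q0 + complex_of_real t * w0)"
      using Q1 by simp
    then show ?thesis by (simp add: cis_cnj)
  qed
  have "3 * t < 2 * (- Re (cnj Q0 * cnj (cnj w0))) + 2 * R * sin (pi - th)"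
    using geo_half[OF R s e se k c sps cps ps psi' th' a2' a3' ca2' ca3' Q0' Q0R' w0' t Q1'] .
  moreover have "Re (cnj Q0 * cnj (cnj w0)) = Re (Q0 * cnj w0)" by simp
  ultimately show ?thesis by simp
qed


lemma refl_formula: "(\<i> * cis a)^2 * cnj (cis b * (\<i> * cis a)) = \<i> * cis (a - b)"
proof -
  have "(\<i> * cis a)^2 * cnj (cis b * (\<i> * cis a)) = \<i> * (cis a * cis (-b)) * (cis a * cis (-a)) * (\<i> * (- \<i>))"
    by (simp add: cis_cnj power2_eq_square algebra_simps)
  also have "\<dots> = \<i> * cis (a - b)" by (simp add: cis_mult)
  finally show ?thesis .
qed

lemma refl_inv:
  assumes "cmod T = 1" "v' = T^2 * cnj v"
  shows "v = T^2 * cnj v'"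
proof -
  have TT: "T * cnj T = 1" using assms(1) complex_norm_square[of T] by simp
  have "T^2 * cnj v' = (T * cnj T)^2 * v" using assms(2) by (simp add: power2_eq_square algebra_simps)
  then show ?thesis using TT by simp
qed

lemma inner_formula: "Re (cis p * cnj (cis b * (\<i> * cis p))) = - sin b"
proof -
  have "cis p * cnj (cis b * (\<i> * cis p)) = - \<i> * cis (-b) * (cis p * cis (-p))"
    by (simp add: cis_cnj algebra_simps)
  also have "\<dots> = - \<i> * cis (-b)" using cis_mult[of p "-p"] by simp
  finally have eq: "cis p * cnj (cis b * (\<i> * cis p)) = - \<i> * cis (-b)" .
  show ?thesis unfolding eq by simp
qed

lemma inner_formula2: "Re (cis p * cnj (\<i> * cis (p - b))) = sin b"
proof -
  have "cis p * cnj (\<i> * cis (p - b)) = - \<i> * (cis p * cis (b - p))"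
    by (simp add: cis_cnj algebra_simps)
  also have "\<dots> = - \<i> * cis b" using cis_mult[of p "b - p"] by simp
  finally have eq: "cis p * cnj (\<i> * cis (p - b)) = - \<i> * cis b" .
  show ?thesis unfolding eq by simp
qed

lemma refl_formula2: "(\<i> * cis a)^2 * cnj (cis b * (\<i> * cis c)) = \<i> * cis a * cis (a - b - c)"
proof -
  have "(\<i> * cis a)^2 * cnj (cis b * (\<i> * cis c)) = \<i> * cis a * (cis a * cis (-b) * cis (-c)) * (\<i> * (- \<i>))"
    by (simp add: cis_cnj power2_eq_square algebra_simps)
  also have "cis a * cis (-b) * cis (-c) = cis (a - b - c)" by (simp add: cis_mult)
  finally show ?thesis by simp
qed

lemma pos_CR: "fst x = CR \<Longrightarrow> pos phs R x = - complex_of_real (centre_dist phs R) + complex_of_real R * cis (phi_of x)"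
  by (simp add: pos_def O_R_def)
lemma pos_Cr: "fst x = Cr \<Longrightarrow> pos phs R x = cis (phi_of x)"
  by (simp add: pos_def)

lemma vel_eq: "vel x = cis (theta_of x) * (\<i> * cis (phi_of x))"
  by (simp add: vel_def tangent_def)

lemma big_step:
  assumes b: "bstep phs R u v" and fu: "fst u = CR" and fv: "fst v = CR" and R: "0 < R"
  shows "cis (phi_of v) = cis (phi_of u + 2 * theta_of u) \<and> theta_of v = theta_of u"
proof -
  define a where "a = phi_of u"
  define b where "b = phi_of v"
  define th where "th = theta_of u"
  obtain t where t: "0 < t" and P: "pos phs R v = pos phs R u + complex_of_real t * vel u"
    using b unfolding bstep_def by blast
  have Pe: "complex_of_real R * cis b = complex_of_real R * cis a + complex_of_real t * (cis th * (\<i> * cis a))"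
    using P unfolding pos_CR[OF fu] pos_CR[OF fv] vel_eq a_def b_def th_def by simp
  have ci: "cis th * (\<i> * cis a) = \<i> * cis (th + a)" using cis_mult[of th a] by (simp add: algebra_simps)
  have re: "R * cos b = R * cos a - t * sin (th + a)"
    using arg_cong[OF Pe, of Re] unfolding ci by simp
  have im: "R * sin b = R * sin a + t * cos (th + a)"
    using arg_cong[OF Pe, of Im] unfolding ci by simp
  have "(R * cos b)^2 + (R * sin b)^2 = R^2"
    by (simp add: power_mult_distrib flip: distrib_left) 
  also have "(R * cos b)^2 + (R * sin b)^2 = R^2 + t^2 - 2*R*t*(sin (th + a) * cos a - cos (th + a) * sin a)"
  proof -
    have "(R * cos a - t * sin (th + a))^2 + (R * sin a + t * cos (th + a))^2
       = R^2*((sin a)^2 + (cos a)^2) + t^2*((sin (th+a))^2 + (cos (th+a))^2)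
         - 2*R*t*(sin (th + a) * cos a - cos (th + a) * sin a)"
      by algebra
    then show ?thesis unfolding re im by (simp only: sin_cos_squared_add mult_1_right)
  qed
  also have "sin (th + a) * cos a - cos (th + a) * sin a = sin th"
    using sin_diff[of "th + a" a] by simp
  finally have "t * t = t * (2*R*sin th)" by (simp add: power2_eq_square algebra_simps)
  then have tv: "t = 2*R*sin th" using t by simp
  have i1: "cos (a + 2*th) = cos a - 2 * sin th * sin (th + a)"
    using cos_add[of "th + a" th] cos_diff[of "th + a" th] by (simp add: algebra_simps)
  have i2: "sin (a + 2*th) = sin a + 2 * sin th * cos (th + a)"
    using sin_add[of "th + a" th] sin_diff[of "th + a" th] by (simp add: algebra_simps)
  have "R * cos b = R * cos (a + 2*th)" using re unfolding i1 tv by (simp add: algebra_simps)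
  then have "cos b = cos (a + 2*th)" using R by simp
  moreover have "R * sin b = R * sin (a + 2*th)" using im unfolding i2 tv by (simp add: algebra_simps)
  then have "sin b = sin (a + 2*th)" using R by simp
  ultimately have cb: "cis b = cis (a + 2*th)" by (simp add: complex_eq_iff)
  have V: "vel v = (tangent v)^2 * cnj (vel u)" using b unfolding bstep_def by blast
  have "cis (theta_of v) * (\<i> * cis b) = (\<i> * cis b)^2 * cnj (cis th * (\<i> * cis a))"
    using V unfolding vel_eq tangent_def b_def th_def a_def by simp
  also have "\<dots> = \<i> * cis b * cis (b - th - a)" by (rule refl_formula2)
  also have "cis (b - th - a) = cis b * cis (- th - a)" by (simp add: cis_mult algebra_simps)
  also have "\<dots> = cis th" unfolding cb by (simp add: cis_mult)
  finally have "cis (theta_of v) * (\<i> * cis b) = cis th * (\<i> * cis b)" by (simp add: algebra_simps)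
  moreover have "\<i> * cis b \<noteq> 0" by (simp add: cis_neq_zero)
  ultimately have ct: "cis (theta_of v) = cis th" by simp
  have vu: "0 < theta_of u \<and> theta_of u < pi" "0 < theta_of v \<and> theta_of v < pi"
    using b unfolding bstep_def valid_phase_def by auto
  have "theta_of v = th" using vu unfolding th_def by (intro cis_eq_small[OF ct[unfolded th_def]]) auto
  then show ?thesis using cb unfolding a_def b_def th_def by simp
qed

lemma geo_consts:
  fixes phs R :: real
  assumes "0 < phs" "phs < pi/2" "33.2 \<le> R"
  defines "s \<equiv> sin phs" and "e \<equiv> cos phs" and "k \<equiv> sqrt (R\<^sup>2 - (sin phs)\<^sup>2)"
  shows "0 < s" "s \<le> 1" "0 \<le> e" "e \<le> 1" "s^2 + e^2 = 1"
    "sin (psi_star phs R) = s / R" "cos (psi_star phs R) = k / R"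
    "0 < psi_star phs R" "psi_star phs R \<le> pi/6" "centre_dist phs R = k - e"
proof -
  have Rpos: "0 < R" using assms(3) by simp
  show s0: "0 < s" unfolding s_def using assms by (intro sin_gt_zero) auto
  show s1: "s \<le> 1" unfolding s_def by simp
  show "0 \<le> e" unfolding e_def using assms by (intro cos_ge_zero) auto
  show "e \<le> 1" unfolding e_def by simp
  show "s^2 + e^2 = 1" unfolding s_def e_def by simp
  have sR: "s / R \<le> 1/2" using s1 assms(3) Rpos by (simp add: field_simps)
  have sR0: "0 < s / R" using s0 Rpos by simp
  have sR1: "s / R \<le> 1" using sR by linarith
  show sp: "sin (psi_star phs R) = s / R" unfolding psi_star_def s_def[symmetric]
    using sin_arcsin[of "s/R"] sR1 sR0 by linarith
  have "cos (psi_star phs R) = sqrt (1 - (s/R)^2)" unfolding psi_star_def s_def[symmetric]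
    using sR1 sR0 by (intro cos_arcsin) auto
  also have "1 - (s/R)^2 = (R^2 - s^2) / R^2" using Rpos by (simp add: field_simps power2_eq_square)
  also have "sqrt ((R^2 - s^2) / R^2) = k / R" unfolding k_def s_def using Rpos by (simp add: real_sqrt_divide)
  finally show "cos (psi_star phs R) = k / R" .
  have rng: "- (pi/2) \<le> psi_star phs R \<and> psi_star phs R \<le> pi/2"
    unfolding psi_star_def s_def[symmetric] using arcsin[of "s/R"] sR1 sR0 by auto
  show "0 < psi_star phs R"
  proof (rule ccontr)
    assume "\<not> 0 < psi_star phs R"
    then have "sin (psi_star phs R) \<le> sin 0" using rng pi_gt_zero by (subst sin_mono_le_eq) auto
    then show False using sp sR0 by simp
  qed
  have "sin (psi_star phs R) \<le> sin (pi/6)" using sp sR by (simp add: sin_30)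
  then show "psi_star phs R \<le> pi/6" using rng pi_gt_zero by (subst (asm) sin_mono_le_eq) auto
  show "centre_dist phs R = k - e" unfolding centre_dist_def k_def e_def by simp
qed

lemma gamma_r_in:
  fixes phs R :: real
  assumes "0 < phs" "phs < pi/2" "33.2 \<le> R" "valid_phase phs R x" "fst x = Cr"
  shows "cmod (pos phs R x + complex_of_real (centre_dist phs R)) \<le> R"
proof -
  define s where "s = sin phs"
  define e where "e = cos phs"
  define k where "k = sqrt (R\<^sup>2 - s\<^sup>2)"
  note cs = geo_consts[OF assms(1-3), folded s_def e_def, folded k_def]
  define c where "c = centre_dist phs R"
  define f where "f = phi_of x"
  have f: "phs \<le> f" "f \<le> 2*pi - phs" using assms(4,5) unfolding valid_phase_def f_def by auto
  have cf: "cos f \<le> e"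
  proof (cases "f \<le> pi")
    case True then show ?thesis unfolding e_def using f assms(1,2) by (subst cos_mono_le_eq) auto
  next
    case False
    have "cos f = cos (2*pi - f)" by simp
    also have "\<dots> \<le> e" unfolding e_def using f False assms(1,2) by (subst cos_mono_le_eq) auto
    finally show ?thesis .
  qed
  have Rpos: "0 < R" using assms(3) by simp
  have sR: "s^2 \<le> R^2" using cs(1,2) assms(3) by (intro power_mono) auto
  have kk: "k^2 = R^2 - s^2" unfolding k_def using sR by simp
  have "(R - 1)^2 = R^2 - 2*R + 1" by (simp add: power2_eq_square algebra_simps)
  moreover have "s^2 \<le> 1" using cs(1,2) by (simp add: power_le_one)
  ultimately have "(R - 1)^2 \<le> R^2 - s^2" using assms(3) by simp
  then have kR: "R - 1 \<le> k" unfolding k_def by (rule real_le_rsqrt)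
  have c: "c = k - e" unfolding c_def using cs(10) .
  have cpos: "0 < c" using c kR cs(4) assms(3) by simp
  have "(cmod (cis f + complex_of_real c))^2 = (cos f + c)^2 + (sin f)^2"
    by (simp add: cmod_power2)
  also have "\<dots> = ((sin f)^2 + (cos f)^2) + 2*c*cos f + c^2" by (simp add: power2_eq_square algebra_simps)
  also have "\<dots> = 1 + 2*c*cos f + c^2" by simp
  also have "\<dots> \<le> 1 + 2*c*e + c^2" using cf cpos by simp
  also have "\<dots> = R^2" using kk cs(5) unfolding c by (simp add: power2_eq_square algebra_simps)
  finally have "(cmod (cis f + complex_of_real c))^2 \<le> R^2" .
  then have "cmod (cis f + complex_of_real c) \<le> R" using Rpos by (simp add: power2_le_iff_abs_le)
  then show ?thesis unfolding pos_Cr[OF assms(5)] f_def c_def .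
qed

theorem mainTheorem10:
  fixes phs R :: real and x :: phase and n0 n1 :: nat
  defines "F \<equiv> bmap phs R"
  assumes "0 < phs" and "phs < pi / 2" and "R \<ge> 33.2"
    and "x \<in> Mr phs R"
    and "\<forall>k < n0 + n1 + 2. bstep phs R ((F ^^ k) x) ((F ^^ Suc k) x)"
    and "(F ^^ n0) x \<in> Mr_out phs R" and "\<forall>k < n0. (F ^^ k) x \<notin> Mr_out phs R"
    and "(F ^^ (n0 + 1 + n1)) x \<in> MR_out phs R"
    and "\<forall>k < n1. (F ^^ (n0 + 1 + k)) x \<notin> MR_out phs R"
    and "n1 \<ge> 2"
  shows "let x0 = (F ^^ n0) x; x1 = (F ^^ (n0 + 1)) x; x2 = (F ^^ (n0 + n1 + 2)) x;
             d0 = sin (theta_of x0); d1 = R * sin (theta_of x1); d2 = sin (theta_of x2);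
             tau0 = cmod (pos phs R x0 - pos phs R x1);
             tau1 = cmod (pos phs R ((F ^^ (n0 + 1 + n1)) x) - pos phs R x2)
         in tau0 < 2/3 * d0 + 2/3 * d1 \<and> tau1 < 2/3 * d1 + 2/3 * d2"
proof -
  note defF = F_def
  define xs where "xs k = (F ^^ k) x" for k
  have Fs: "F (xs k) = xs (Suc k)" for k unfolding xs_def by simp
  have Fb: "bmap phs R (xs k) = xs (Suc k)" for k using Fs unfolding F_def .
  have stp: "bstep phs R (xs k) (xs (Suc k))" if "k < n0 + n1 + 2" for k
    using assms(6) that unfolding xs_def by simp
  have Rpos: "0 < R" using assms(4) by simp
  define s where "s = sin phs"
  define e where "e = cos phs"
  define k where "k = sqrt (R\<^sup>2 - s\<^sup>2)"
  define c where "c = centre_dist phs R"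
  define ps where "ps = psi_star phs R"
  note cs = geo_consts[OF assms(2) assms(3) assms(4), folded s_def e_def, folded k_def c_def ps_def]
  have cdef: "c = k - e" using cs(10) .
  have x0out: "xs n0 \<in> Mr_out phs R" using assms(7) unfolding xs_def .
  have f0: "fst (xs n0) = Cr" using x0out unfolding Mr_out_def Mr_def by auto
  have f1: "fst (xs (Suc n0)) = CR" using x0out Fb[of n0] unfolding Mr_out_def MR_def by auto
  have yout: "xs (n0 + 1 + n1) \<in> MR_out phs R" using assms(9) unfolding xs_def .
  have fy: "fst (xs (n0 + 1 + n1)) = CR" using yout unfolding MR_out_def MR_def by auto
  have f2: "fst (xs (Suc (n0 + 1 + n1))) = Cr" using yout Fb[of "n0 + 1 + n1"] unfolding MR_out_def Mr_def by auto
  have inMR: "fst (xs (Suc n0 + j)) = CR" if "j \<le> n1" for j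
    using that
  proof (induction j)
    case 0 then show ?case using f1 by simp
  next
    case (Suc j)
    have ij: "j < n1" using Suc.prems by simp
    have cur: "fst (xs (Suc n0 + j)) = CR" using Suc.IH ij by simp
    have bs: "bstep phs R (xs (Suc n0 + j)) (xs (Suc (Suc n0 + j)))" using ij by (intro stp) simp
    have "xs (Suc n0 + j) \<notin> MR_out phs R" using assms(10) ij unfolding xs_def by simp
    moreover have "xs (Suc n0 + j) \<in> MR phs R" using cur bs unfolding MR_def bstep_def by auto
    ultimately have "bmap phs R (xs (Suc n0 + j)) \<notin> Mr phs R" unfolding MR_out_def by auto
    then have "xs (Suc (Suc n0 + j)) \<notin> Mr phs R" using Fb by simp
    moreover have "valid_phase phs R (xs (Suc (Suc n0 + j)))" using bs unfolding bstep_def by auto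
    ultimately have "fst (xs (Suc (Suc n0 + j))) \<noteq> Cr" unfolding Mr_def by auto
    then show ?case by (cases "fst (xs (Suc (Suc n0 + j)))") auto
  qed
  have bigs: "cis (phi_of (xs (Suc (Suc n0 + j)))) = cis (phi_of (xs (Suc n0 + j)) + 2 * theta_of (xs (Suc n0 + j)))
      \<and> theta_of (xs (Suc (Suc n0 + j))) = theta_of (xs (Suc n0 + j))" if "j < n1" for j
  proof -
    have b: "bstep phs R (xs (Suc n0 + j)) (xs (Suc (Suc n0 + j)))" using that by (intro stp) simp
    have c1: "fst (xs (Suc n0 + j)) = CR" using inMR that by simp
    have c2: "fst (xs (Suc (Suc n0 + j))) = CR" using inMR[of "Suc j"] that by simp
    show ?thesis using big_step[OF b c1 c2 Rpos] .
  qed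
  have thinv: "theta_of (xs (Suc n0 + j)) = theta_of (xs (Suc n0))" if "j \<le> n1" for j
    using that
  proof (induction j)
    case 0 then show ?case by simp
  next
    case (Suc j) then show ?case using bigs[of j] by simp
  qed
  have valid: "valid_phase phs R (xs j)" if "j \<le> n0 + n1 + 2" for j
  proof (cases "j = 0")
    case True then show ?thesis using stp[of 0] unfolding bstep_def by auto
  next
    case False
    then obtain i where "j = Suc i" by (cases j) auto
    then show ?thesis using stp[of i] that unfolding bstep_def by auto
  qed
  have velnorm: "cmod (vel z) = 1" for z unfolding vel_eq by (simp add: norm_mult)
  have tangnorm: "cmod (tangent z) = 1" for z unfolding tangent_def by (simp add: norm_mult)
  obtain m where m: "n1 = Suc (Suc m)" using assms(11) by (intro that[of "n1 - 2"]) simp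
  define x0 where "x0 = xs n0"
  define x1 where "x1 = xs (Suc n0)"
  obtain t0 where t0: "0 < t0" and P0: "pos phs R x1 = pos phs R x0 + complex_of_real t0 * vel x0"
    using stp[of n0] unfolding bstep_def x0_def x1_def by auto
  have V1: "vel x1 = (tangent x1)^2 * cnj (vel x0)" using stp[of n0] unfolding bstep_def x0_def x1_def by auto
  have V0: "vel x0 = (tangent x1)^2 * cnj (vel x1)" using refl_inv[OF tangnorm V1] .
  have vx1: "valid_phase phs R x1" using valid[of "Suc n0"] unfolding x1_def by simp
  have vx0: "valid_phase phs R x0" using valid[of n0] unfolding x0_def by simp
  have fx1: "fst x1 = CR" using f1 unfolding x1_def .
  have w0eq: "vel x0 = \<i> * cis (phi_of x1 - theta_of x1)"
  proof -
    have "(tangent x1)^2 * cnj (vel x1) = \<i> * cis (phi_of x1 - theta_of x1)"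
      unfolding vel_eq[of x1] tangent_def by (rule refl_formula)
    then show ?thesis using V0 by simp
  qed
  have b1: "cis (phi_of (xs (Suc (Suc n0)))) = cis (phi_of x1 + 2 * theta_of x1)"
    using bigs[of 0] m unfolding x1_def by simp
  have b2: "cis (phi_of (xs (Suc (Suc (Suc n0))))) = cis (phi_of (xs (Suc (Suc n0))) + 2 * theta_of x1)"
    using bigs[of 1] thinv[of 1] m unfolding x1_def by simp
  have b2': "cis (phi_of (xs (Suc (Suc (Suc n0))))) = cis (phi_of x1 + 4 * theta_of x1)"
  proof -
    have "cis (phi_of (xs (Suc (Suc n0))) + 2 * theta_of x1) = cis (phi_of (xs (Suc (Suc n0)))) * cis (2 * theta_of x1)"
      by (simp add: cis_mult)
    also have "\<dots> = cis (phi_of x1 + 2 * theta_of x1) * cis (2 * theta_of x1)" using b1 by simp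
    also have "\<dots> = cis (phi_of x1 + 4 * theta_of x1)" by (simp add: cis_mult algebra_simps)
    finally show ?thesis using b2 by simp
  qed
  have va2: "valid_phase phs R (xs (Suc (Suc n0)))" using valid[of "Suc (Suc n0)"] m by simp
  have va3: "valid_phase phs R (xs (Suc (Suc (Suc n0))))" using valid[of "Suc (Suc (Suc n0))"] m by simp
  have fa2: "fst (xs (Suc (Suc n0))) = CR" using inMR[of 1] m by simp
  have fa3: "fst (xs (Suc (Suc (Suc n0)))) = CR" using inMR[of 2] m by (simp add: numeral_2_eq_2)
  have Q1a: "- complex_of_real c + complex_of_real R * cis (phi_of x1) = pos phs R x0 + complex_of_real t0 * vel x0"
    using P0 unfolding pos_CR[OF fx1] c_def by simp
  have r1: "- ps \<le> phi_of x1" "phi_of x1 \<le> ps" "0 < theta_of x1" "theta_of x1 < pi"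
    using vx1 fx1 unfolding valid_phase_def ps_def by auto
  have r2: "- ps \<le> phi_of (xs (Suc (Suc n0)))" "phi_of (xs (Suc (Suc n0))) \<le> ps"
    using va2 fa2 unfolding valid_phase_def ps_def by auto
  have r3: "- ps \<le> phi_of (xs (Suc (Suc (Suc n0))))" "phi_of (xs (Suc (Suc (Suc n0)))) \<le> ps"
    using va3 fa3 unfolding valid_phase_def ps_def by auto
  have r4: "cmod (pos phs R x0) = 1" unfolding pos_Cr[OF f0[folded x0_def]] by simp
  have r5: "cmod (pos phs R x0 + complex_of_real c) \<le> R"
    using gamma_r_in[OF assms(2) assms(3) assms(4) vx0 f0[folded x0_def]] unfolding c_def .
  have g1: "3 * t0 < 2 * (- Re (pos phs R x0 * cnj (vel x0))) + 2 * R * sin (theta_of x1)"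
    by (rule geo[OF assms(4) cs(1) cs(2) cs(3) cs(4) cs(5) k_def cdef cs(6) cs(7) cs(8) cs(9)
          r1(1) r1(2) r1(3) r1(4) r2 r3 b1 b2' r4 r5 w0eq t0 Q1a])
  have d0e: "- Re (pos phs R x0 * cnj (vel x0)) = sin (theta_of x0)"
    unfolding pos_Cr[OF f0[folded x0_def]] vel_eq using inner_formula by simp
  have tau0: "cmod (pos phs R x0 - pos phs R x1) = t0"
    unfolding P0 using t0 by (simp add: norm_mult velnorm)
  have ineq1: "cmod (pos phs R x0 - pos phs R x1) < 2/3 * sin (theta_of x0) + 2/3 * (R * sin (theta_of x1))"
    using g1 unfolding tau0 d0e by simp
  define y where "y = xs (n0 + 1 + n1)"
  define p1 where "p1 = xs (Suc n0 + Suc m)"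
  define p2 where "p2 = xs (Suc n0 + m)"
  define x2 where "x2 = xs (Suc (n0 + 1 + n1))"
  have yi: "y = xs (Suc (Suc n0 + Suc m))" unfolding y_def m by simp
  have p1i: "p1 = xs (Suc (Suc n0 + m))" unfolding p1_def by simp
  have bq1: "cis (phi_of y) = cis (phi_of p1 + 2 * theta_of p1) \<and> theta_of y = theta_of p1"
    using bigs[of "Suc m"] m unfolding yi p1_def by simp
  have bq2: "cis (phi_of p1) = cis (phi_of p2 + 2 * theta_of p2) \<and> theta_of p1 = theta_of p2"
    using bigs[of m] m unfolding p1i p2_def by simp
  define tau where "tau = theta_of y"
  define psy where "psy = phi_of y"
  have thy: "theta_of y = theta_of x1" using thinv[of n1] unfolding y_def x1_def by simp
  have cpsy: "cis psy = cis (phi_of p1) * cis (2*tau)"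
    using bq1 unfolding psy_def tau_def by (simp add: cis_mult)
  have cpsy2: "cis psy = cis (phi_of p2) * cis (4*tau)"
  proof -
    have "cis (phi_of p1) = cis (phi_of p2) * cis (2*tau)" using bq1 bq2 unfolding tau_def by (simp add: cis_mult)
    then show ?thesis using cpsy by (simp add: cis_mult algebra_simps)
  qed
  have ca2: "cis (phi_of p1) = cis (psy + 2 * (pi - tau))"
  proof -
    have "cis (psy + 2 * (pi - tau)) = cis ((psy - 2*tau) + 2*pi)" by (simp add: algebra_simps)
    also have "\<dots> = cis psy * cis (- (2*tau))" unfolding cis_plus_2pi by (simp add: cis_mult)
    also have "\<dots> = cis (phi_of p1)" unfolding cpsy by (simp add: cis_mult)
    finally show ?thesis by simp
  qed
  have ca3: "cis (phi_of p2) = cis (psy + 4 * (pi - tau))"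
  proof -
    have "cis (psy + 4 * (pi - tau)) = cis (((psy - 4*tau) + 2*pi) + 2*pi)" by (simp add: algebra_simps)
    also have "\<dots> = cis psy * cis (- (4*tau))" unfolding cis_plus_2pi by (simp add: cis_mult)
    also have "\<dots> = cis (phi_of p2)" unfolding cpsy2 by (simp add: cis_mult)
    finally show ?thesis by simp
  qed
  obtain t1 where t1: "0 < t1" and P1: "pos phs R x2 = pos phs R y + complex_of_real t1 * vel y"
    using stp[of "n0 + 1 + n1"] unfolding bstep_def x2_def y_def by auto
  have Vx2: "vel x2 = (tangent x2)^2 * cnj (vel y)" using stp[of "n0 + 1 + n1"] unfolding bstep_def x2_def y_def by auto
  have Vy: "vel y = (tangent x2)^2 * cnj (vel x2)" using refl_inv[OF tangnorm Vx2] .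
  have vyv: "valid_phase phs R y" using valid[of "n0 + 1 + n1"] unfolding y_def by simp
  have vx2: "valid_phase phs R x2" using valid[of "Suc (n0 + 1 + n1)"] unfolding x2_def by simp
  have fx2: "fst x2 = Cr" using f2 unfolding x2_def .
  have fyy: "fst y = CR" using fy unfolding y_def .
  have vp1: "valid_phase phs R p1" using valid[of "Suc n0 + Suc m"] m unfolding p1_def by simp
  have vp2: "valid_phase phs R p2" using valid[of "Suc n0 + m"] m unfolding p2_def by simp
  have fp1: "fst p1 = CR" using inMR[of "Suc m"] m unfolding p1_def by simp
  have fp2: "fst p2 = CR" using inMR[of m] m unfolding p2_def by simp
  have cminus: "cis (z - pi) = - cis z" for z by (simp add: complex_eq_iff cos_diff sin_diff)
  have w1eq: "- vel y = \<i> * cis (psy - (pi - tau))"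
  proof -
    have eqa: "psy - (pi - tau) = (tau + psy) - pi" by simp
    have "cis (psy - (pi - tau)) = - cis (tau + psy)" unfolding eqa by (rule cminus)
    then show ?thesis unfolding vel_eq psy_def tau_def using cis_mult[of "theta_of y" "phi_of y"]
      by (simp add: algebra_simps)
  qed
  have Q1b: "- complex_of_real c + complex_of_real R * cis psy = pos phs R x2 + complex_of_real t1 * (- vel y)"
    using P1 unfolding pos_CR[OF fyy] c_def psy_def by (simp add: algebra_simps)
  have thr: "0 < tau" "tau < pi" using vyv unfolding valid_phase_def tau_def by auto
  have q1: "- ps \<le> psy" "psy \<le> ps" using vyv fyy unfolding valid_phase_def ps_def psy_def by auto
  have q2: "- ps \<le> phi_of p1" "phi_of p1 \<le> ps" using vp1 fp1 unfolding valid_phase_def ps_def by auto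
  have q3: "- ps \<le> phi_of p2" "phi_of p2 \<le> ps" using vp2 fp2 unfolding valid_phase_def ps_def by auto
  have q4: "cmod (pos phs R x2) = 1" unfolding pos_Cr[OF fx2] by simp
  have q5: "cmod (pos phs R x2 + complex_of_real c) \<le> R"
    using gamma_r_in[OF assms(2) assms(3) assms(4) vx2 fx2] unfolding c_def .
  have th': "0 < pi - tau" "pi - tau < pi" using thr by auto
  have g2: "3 * t1 < 2 * (- Re (pos phs R x2 * cnj (- vel y))) + 2 * R * sin (pi - tau)"
    by (rule geo[OF assms(4) cs(1) cs(2) cs(3) cs(4) cs(5) k_def cdef cs(6) cs(7) cs(8) cs(9)
          q1 th' q2 q3 ca2 ca3 q4 q5 w1eq t1 Q1b])
  have d2e: "- Re (pos phs R x2 * cnj (- vel y)) = sin (theta_of x2)"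
  proof -
    have vy2: "vel y = \<i> * cis (phi_of x2 - theta_of x2)"
      using Vy unfolding vel_eq[of x2] tangent_def refl_formula .
    show ?thesis unfolding pos_Cr[OF fx2] vy2 using inner_formula2[of "phi_of x2" "theta_of x2"] by simp
  qed
  have tau1: "cmod (pos phs R y - pos phs R x2) = t1"
    unfolding P1 using t1 by (simp add: norm_mult velnorm)
  have ineq2: "cmod (pos phs R y - pos phs R x2) < 2/3 * (R * sin (theta_of x1)) + 2/3 * sin (theta_of x2)"
    using g2 unfolding tau1 d2e using thy unfolding tau_def by simp
  have e1: "(F ^^ n0) x = x0" "(F ^^ (n0 + 1)) x = x1" "(F ^^ (n0 + n1 + 2)) x = x2"
      "(F ^^ (n0 + 1 + n1)) x = y"
    unfolding x0_def x1_def x2_def y_def xs_def by simp_all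
  show ?thesis unfolding Let_def e1 using ineq1 ineq2 by simp
qed

end
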